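(* Let $\Phi:[a,b]\to\mathbb{C}$ be continuous and nowhere zero, and let $X^{(n)}$, $\widetilde X^{(n)}$ ($n\ge 0$) be the $\Phi$-power functions defined below. Then for all $x_0,x\in[a,b]$: $$\widetilde X^{(n)}(x_0,x)=X^{(n)}(x,x_0)\quad\text{for } n \text{ even},$$ and $$\widetilde X^{(n)}(x_0,x)=-\widetilde X^{(n)}(x,x_0),\qquad X^{(n)}(x_0,x)=-X^{(n)}(x,x_0)\quad\text{for } n \text{ odd}.$$
   Context: For $x_0,x\in[a,b]$ the $\Phi$-power functions are defined recursively by $X^{(0)}(x_0,x)\equiv 1$, $\widetilde X^{(0)}(x_0,x)\equiv 1$ and, for $n\ge 1$, $$X^{(n)}(x_0,x)=n\int_{x_0}^x X^{(n-1)}(x_0,\xi)\,\big(\Phi(\xi)\big)^{(-1)^n}\,d\xi,\qquad \widetilde X^{(n)}(x_0,x)=n\int_{x_0}^x \widetilde X^{(n-1)}(x_0,\xi)\,\Big(\frac{1}{\Phi(\xi)}\Big)^{(-1)^n}\,d\xi.$$ *)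

theory Defs
  imports "HOL-Analysis.Analysis"
begin

definition oint :: "(real \<Rightarrow> complex) \<Rightarrow> real \<Rightarrow> real \<Rightarrow> complex" where
  "oint f x0 x = (if x0 \<le> x then integral {x0..x} f else - integral {x..x0} f)"

text \<open>Phi-power functions X^(n)(x0,x): the factor Phi^((-1)^n) is Phi for n even, 1/Phi for n odd.\<close>
fun Xpow :: "(real \<Rightarrow> complex) \<Rightarrow> nat \<Rightarrow> real \<Rightarrow> real \<Rightarrow> complex" where
  "Xpow Phi 0 x0 x = 1"
| "Xpow Phi (Suc n) x0 x =
     of_nat (Suc n) * oint (\<lambda>\<xi>. Xpow Phi n x0 \<xi> *
        (if even (Suc n) then Phi \<xi> else 1 / Phi \<xi>)) x0 x"

definition Xtilde :: "(real \<Rightarrow> complex) \<Rightarrow> nat \<Rightarrow> real \<Rightarrow> real \<Rightarrow> complex" where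
  "Xtilde Phi n = Xpow (\<lambda>\<xi>. 1 / Phi \<xi>) n"

end

theory Submission imports Defs begin


lemma oint_alt:
  fixes f :: "real \<Rightarrow> complex"
  assumes f: "continuous_on {a..b} f" and s: "s \<in> {a..b}" and t: "t \<in> {a..b}"
  shows "oint f s t = integral {a..t} f - integral {a..s} f"
proof (cases "s \<le> t")
  case True
  have "f integrable_on {a..t}"
    by (rule integrable_continuous_interval, rule continuous_on_subset[OF f]) (use t in auto)
  then have "integral {a..s} f + integral {s..t} f = integral {a..t} f"
    using s True by (intro Henstock_Kurzweil_Integration.integral_combine) (use s True in auto)
  then show ?thesis using True unfolding oint_def by (simp add: algebra_simps)
next
  case False
  have "f integrable_on {a..s}"
    by (rule integrable_continuous_interval, rule continuous_on_subset[OF f]) (use s in auto)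
  then have "integral {a..t} f + integral {t..s} f = integral {a..s} f"
    using t False by (intro Henstock_Kurzweil_Integration.integral_combine) (use t False in auto)
  then show ?thesis using False unfolding oint_def by (simp add: algebra_simps)
qed

lemma oint_deriv:
  fixes f :: "real \<Rightarrow> complex"
  assumes f: "continuous_on {a..b} f" and s: "s \<in> {a..b}" and t: "t \<in> {a..b}"
  shows "((\<lambda>u. oint f s u) has_vector_derivative f t) (at t within {a..b})"
proof -
  have "((\<lambda>u. integral {a..u} f - integral {a..s} f) has_vector_derivative f t) (at t within {a..b})"
    using integral_has_vector_derivative[OF f t] by (simp add: has_vector_derivative_diff_const)
  then show ?thesis
    by (rule has_vector_derivative_transform[rotated 2]) (use t oint_alt[OF f s] in auto)
qed

lemma oint_cont2:
  fixes f :: "real \<Rightarrow> complex"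
  assumes f: "continuous_on {a..b} f" and t: "t \<in> {a..b}"
  shows "continuous_on {a..b} (\<lambda>s. oint f s t)"
proof -
  have "continuous_on {a..b} (\<lambda>s. integral {a..t} f - integral {a..s} f)"
    by (intro continuous_intros continuous_on_vector_derivative[where f' = f])
       (rule integral_has_vector_derivative[OF f])
  then show ?thesis
    by (rule continuous_on_eq) (use t oint_alt[OF f _ t] in auto)
qed

lemma oint_cont1:
  fixes f :: "real \<Rightarrow> complex"
  assumes f: "continuous_on {a..b} f" and s: "s \<in> {a..b}"
  shows "continuous_on {a..b} (\<lambda>t. oint f s t)"
  by (rule continuous_on_vector_derivative[where f' = f]) (rule oint_deriv[OF f s])

lemma oint_add_interval:
  fixes f :: "real \<Rightarrow> complex"
  assumes f: "continuous_on {a..b} f" and "s \<in> {a..b}" "c \<in> {a..b}" "t \<in> {a..b}"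
  shows "oint f s c + oint f c t = oint f s t"
  using assms by (simp add: oint_alt[OF f])

lemma oint_same[simp]: "oint f s s = 0"
  by (simp add: oint_def)

lemma oint_swap:
  fixes f :: "real \<Rightarrow> complex"
  assumes f: "continuous_on {a..b} f" and "s \<in> {a..b}" "t \<in> {a..b}"
  shows "oint f t s = - oint f s t"
  using assms by (simp add: oint_alt[OF f])

lemma oint_cong:
  assumes "\<And>x. x \<in> {a..b} \<Longrightarrow> f x = g x" and "s \<in> {a..b}" "t \<in> {a..b}"
  shows "oint f s t = oint g s t"
  unfolding oint_def using assms by (auto intro!: integral_cong)

lemma integral_cmul_complex:
  fixes f :: "real \<Rightarrow> complex"
  assumes "f integrable_on S"
  shows "integral S (\<lambda>x. c * f x) = c * integral S f"
  by (rule integral_unique, rule has_integral_mult_right, rule integrable_integral[OF assms])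

lemma oint_cmul:
  fixes f :: "real \<Rightarrow> complex"
  assumes f: "continuous_on {a..b} f" and s: "s \<in> {a..b}" and t: "t \<in> {a..b}"
  shows "oint (\<lambda>x. c * f x) s t = c * oint f s t"
proof -
  have "continuous_on {a..b} (\<lambda>x. c * f x)" by (intro continuous_intros f)
  have i: "f integrable_on {a..u}" if "u \<in> {a..b}" for u
    by (rule integrable_continuous_interval, rule continuous_on_subset[OF f]) (use that in auto)
  show ?thesis
    using i[OF s] i[OF t]
    by (simp add: oint_alt[OF \<open>continuous_on {a..b} (\<lambda>x. c * f x)\<close> s t] oint_alt[OF f s t]
        integral_cmul_complex algebra_simps)
qed

lemma oint_sum:
  fixes f :: "nat \<Rightarrow> real \<Rightarrow> complex"
  assumes f: "\<And>i. i \<in> I \<Longrightarrow> continuous_on {a..b} (f i)" and I: "finite I"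
    and s: "s \<in> {a..b}" and t: "t \<in> {a..b}"
  shows "oint (\<lambda>x. \<Sum>i\<in>I. f i x) s t = (\<Sum>i\<in>I. oint (f i) s t)"
proof -
  have c: "continuous_on {a..b} (\<lambda>x. \<Sum>i\<in>I. f i x)" by (intro continuous_intros f)
  have i: "f i integrable_on {a..u}" if "u \<in> {a..b}" "i \<in> I" for u i
    by (rule integrable_continuous_interval, rule continuous_on_subset[OF f]) (use that in auto)
  have "oint (f i) s t = integral {a..t} (f i) - integral {a..s} (f i)" if "i \<in> I" for i
    using oint_alt[OF f[OF that] s t] .
  then show ?thesis
    using i s t
    by (simp add: oint_alt[OF c s t] integral_sum[OF I] sum_subtractf)
qed

lemma hper: "(\<And>k. h (Suc (Suc k)) = h k) \<Longrightarrow> h (k + 2 * m) = h k"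
  by (induction m) (auto simp: algebra_simps)

fun It :: "(nat \<Rightarrow> real \<Rightarrow> complex) \<Rightarrow> nat \<Rightarrow> nat \<Rightarrow> real \<Rightarrow> real \<Rightarrow> complex" where
  "It h e 0 s t = 1"
| "It h e (Suc n) s t = oint (\<lambda>r. h (e + n) r * It h e n s r) s t"

context
  fixes a b :: real and h :: "nat \<Rightarrow> real \<Rightarrow> complex"
  assumes hc: "\<And>k. continuous_on {a..b} (h k)"
begin

lemma It_cont1: "s \<in> {a..b} \<Longrightarrow> continuous_on {a..b} (\<lambda>t. It h e n s t)"
proof (induction n)
  case 0 then show ?case by simp
next
  case (Suc n)
  have "continuous_on {a..b} (\<lambda>r. h (e + n) r * It h e n s r)"
    by (rule continuous_on_mult[OF hc Suc.IH[OF Suc.prems]])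
  then show ?case using oint_cont1[OF _ Suc.prems] by simp
qed

lemma It_deriv:
  assumes "s \<in> {a..b}" "u \<in> {a..b}"
  shows "((\<lambda>t. It h e n s t) has_vector_derivative
     (if n = 0 then 0 else h (e + (n - 1)) u * It h e (n - 1) s u)) (at u within {a..b})"
proof (cases n)
  case 0 then show ?thesis by simp
next
  case (Suc m)
  have "continuous_on {a..b} (\<lambda>r. h (e + m) r * It h e m s r)"
    by (rule continuous_on_mult[OF hc It_cont1[OF assms(1)]])
  from oint_deriv[OF this assms] show ?thesis using Suc by simp
qed

lemma It_zero: "0 < n \<Longrightarrow> It h e n s s = 0"
  by (cases n) auto

lemma Chen:
  assumes s: "s \<in> {a..b}" and c: "c \<in> {a..b}"
  shows "t \<in> {a..b} \<Longrightarrow> It h e n s t = (\<Sum>k\<le>n. It h e k s c * It h (e + k) (n - k) c t)"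
proof (induction n arbitrary: t)
  case 0 then show ?case by simp
next
  case (Suc n)
  have ct: "continuous_on {a..b} (\<lambda>r. It h (e + k) (n - k) c r)" for k
    using It_cont1[OF c] .
  have "(\<Sum>k\<le>Suc n. It h e k s c * It h (e + k) (Suc n - k) c t)
      = (\<Sum>k\<le>n. It h e k s c * It h (e + k) (Suc n - k) c t) + It h e (Suc n) s c"
    by simp
  also have "(\<Sum>k\<le>n. It h e k s c * It h (e + k) (Suc n - k) c t)
      = (\<Sum>k\<le>n. oint (\<lambda>r. It h e k s c * (h (e + n) r * It h (e + k) (n - k) c r)) c t)"
  proof (rule sum.cong[OF refl])
    fix k assume k: "k \<in> {..n}"
    then have "Suc n - k = Suc (n - k)" "e + k + (n - k) = e + n" by auto
    then have "It h (e + k) (Suc n - k) c t = oint (\<lambda>r. h (e + n) r * It h (e + k) (n - k) c r) c t"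
      by simp
    then show "It h e k s c * It h (e + k) (Suc n - k) c t
        = oint (\<lambda>r. It h e k s c * (h (e + n) r * It h (e + k) (n - k) c r)) c t"
      using oint_cmul[OF continuous_on_mult[OF hc ct] c Suc.prems] by simp
  qed
  also have "\<dots> = oint (\<lambda>r. \<Sum>k\<le>n. It h e k s c * (h (e + n) r * It h (e + k) (n - k) c r)) c t"
    by (rule oint_sum[symmetric])
       (use c Suc.prems in \<open>auto intro!: continuous_on_mult[OF continuous_on_const continuous_on_mult[OF hc ct]]\<close>)
  also have "\<dots> = oint (\<lambda>r. h (e + n) r * It h e n s r) c t"
  proof (rule oint_cong[OF _ c Suc.prems])
    fix r assume r: "r \<in> {a..b}"
    show "(\<Sum>k\<le>n. It h e k s c * (h (e + n) r * It h (e + k) (n - k) c r)) = h (e + n) r * It h e n s r"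
      by (simp add: Suc.IH[OF r] sum_distrib_left algebra_simps)
  qed
  finally show ?case
    using oint_add_interval[OF continuous_on_mult[OF hc It_cont1[OF s]] s c Suc.prems]
    by (simp add: add.commute)
qed

lemma It_cont2: "t \<in> {a..b} \<Longrightarrow> continuous_on {a..b} (\<lambda>s. It h e n s t)"
proof (induction n arbitrary: e rule: less_induct)
  case (less n)
  show ?case
  proof (cases n)
    case 0 then show ?thesis by simp
  next
    case (Suc m)
    have eq: "It h e n s t = - (\<Sum>k<n. It h e k s t * It h (e + k) (n - k) t s)" if s: "s \<in> {a..b}" for s
    proof -
      have "0 = It h e n s s" using It_zero Suc by simp
      also have "\<dots> = (\<Sum>k\<le>n. It h e k s t * It h (e + k) (n - k) t s)"
        by (rule Chen[OF s less.prems s])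
      also have "\<dots> = (\<Sum>k<n. It h e k s t * It h (e + k) (n - k) t s) + It h e n s t"
        by (simp add: lessThan_Suc_atMost[symmetric])
      finally show ?thesis by (simp add: eq_neg_iff_add_eq_0 add.commute)
    qed
    have "continuous_on {a..b} (\<lambda>s. - (\<Sum>k<n. It h e k s t * It h (e + k) (n - k) t s))"
      by (intro continuous_on_minus continuous_on_sum continuous_on_mult less.IH[OF _ less.prems]
            It_cont1[OF less.prems]) auto
    then show ?thesis
      by (rule continuous_on_eq) (use eq in auto)
  qed
qed

lemma Req:
  assumes s: "s \<in> {a..b}" and u: "u \<in> {a..b}"
  shows "oint (\<lambda>r. h e r * It h (e + 1) n r u) s u
     = (\<Sum>k\<le>n. It h (e + 1 + k) (n - k) s u * oint (\<lambda>r. h e r * It h (e + 1) k r s) s u)"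
proof -
  have gc: "continuous_on {a..b} (\<lambda>r. h e r * It h (e + 1) k r s)" for k
    by (rule continuous_on_mult[OF hc It_cont2[OF s]])
  have "oint (\<lambda>r. h e r * It h (e + 1) n r u) s u
      = oint (\<lambda>r. \<Sum>k\<le>n. It h (e + 1 + k) (n - k) s u * (h e r * It h (e + 1) k r s)) s u"
  proof (rule oint_cong[OF _ s u])
    fix r assume r: "r \<in> {a..b}"
    show "h e r * It h (e + 1) n r u = (\<Sum>k\<le>n. It h (e + 1 + k) (n - k) s u * (h e r * It h (e + 1) k r s))"
      by (simp add: Chen[OF r s u] sum_distrib_left algebra_simps)
  qed
  also have "\<dots> = (\<Sum>k\<le>n. oint (\<lambda>r. It h (e + 1 + k) (n - k) s u * (h e r * It h (e + 1) k r s)) s u)"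
    apply (rule oint_sum)
    apply (rule continuous_on_mult[OF continuous_on_const gc])
    using s u by auto
  also have "\<dots> = (\<Sum>k\<le>n. It h (e + 1 + k) (n - k) s u * oint (\<lambda>r. h e r * It h (e + 1) k r s) s u)"
    using oint_cmul[OF gc s u] by simp
  finally show ?thesis .
qed

lemma LP:
  "s \<in> {a..b} \<Longrightarrow> t \<in> {a..b} \<Longrightarrow>
     It h e (Suc n) s t = oint (\<lambda>r. h e r * It h (e + 1) n r t) s t"
proof (induction n arbitrary: e s t)
  case 0 then show ?case by simp
next
  case (Suc m)
  note s = Suc.prems(1) and t = Suc.prems(2)
  define \<gamma> where "\<gamma> k u = oint (\<lambda>r. h e r * It h (e + 1) k r s) s u" for k u
  define R where "R n u = (\<Sum>k\<le>n. It h (e + 1 + k) (n - k) s u * \<gamma> k u)" for n u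
  define D where "D u = It h e (Suc (Suc m)) s u - R (Suc m) u" for u
  have gc: "continuous_on {a..b} (\<lambda>r. h e r * It h (e + 1) k r s)" for k
    by (rule continuous_on_mult[OF hc It_cont2[OF s]])
  have Req': "oint (\<lambda>r. h e r * It h (e + 1) n r u) s u = R n u" if u: "u \<in> {a..b}" for n u
    unfolding R_def \<gamma>_def by (rule Req[OF s u])
  have dD: "(D has_vector_derivative 0) (at u within {a..b})" if u: "u \<in> {a..b}" for u
  proof -
    have d\<beta>: "((\<lambda>x. It h (e + 1 + k) (Suc m - k) s x) has_vector_derivative
       (if Suc m - k = 0 then 0 else h (e + 1 + k + (Suc m - k - 1)) u * It h (e + 1 + k) (Suc m - k - 1) s u))
       (at u within {a..b})" for k
      by (rule It_deriv[OF s u])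
    have d\<gamma>: "((\<lambda>x. \<gamma> k x) has_vector_derivative h e u * It h (e + 1) k u s) (at u within {a..b})" for k
      unfolding \<gamma>_def using oint_deriv[OF gc s u] by simp
    have dR: "((\<lambda>x. R (Suc m) x) has_vector_derivative
      (\<Sum>k\<le>Suc m. It h (e + 1 + k) (Suc m - k) s u * (h e u * It h (e + 1) k u s)
        + (if Suc m - k = 0 then 0 else h (e + 1 + k + (Suc m - k - 1)) u * It h (e + 1 + k) (Suc m - k - 1) s u) * \<gamma> k u))
      (at u within {a..b})"
      unfolding R_def by (intro has_vector_derivative_sum has_vector_derivative_mult d\<beta> d\<gamma>)
    have S1: "(\<Sum>k\<le>Suc m. It h (e + 1 + k) (Suc m - k) s u * (h e u * It h (e + 1) k u s)) = 0"
    proof -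
      have z: "It h (e + 1) (Suc m) u u = 0" by (rule It_zero) simp
      have "(\<Sum>k\<le>Suc m. It h (e + 1 + k) (Suc m - k) s u * (h e u * It h (e + 1) k u s))
          = h e u * It h (e + 1) (Suc m) u u"
        by (simp only: Chen[OF u s u, of "e+1" "Suc m"] sum_distrib_left mult_ac)
      then show ?thesis using z by simp
    qed
    have S2: "(\<Sum>k\<le>Suc m. (if Suc m - k = 0 then 0 else h (e + 1 + k + (Suc m - k - 1)) u * It h (e + 1 + k) (Suc m - k - 1) s u) * \<gamma> k u)
        = h (e + Suc m) u * It h e (Suc m) s u"
    proof -
      have "(\<Sum>k\<le>Suc m. (if Suc m - k = 0 then 0 else h (e + 1 + k + (Suc m - k - 1)) u * It h (e + 1 + k) (Suc m - k - 1) s u) * \<gamma> k u)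
          = (\<Sum>k\<le>m. (h (e + Suc m) u * It h (e + 1 + k) (m - k) s u) * \<gamma> k u)"
        by (simp add: Suc_diff_le)
      also have "\<dots> = h (e + Suc m) u * R m u"
        unfolding R_def by (simp add: sum_distrib_left algebra_simps)
      also have "\<dots> = h (e + Suc m) u * It h e (Suc m) s u"
        using Req'[OF u, of m] Suc.IH[OF s u] by simp
      finally show ?thesis .
    qed
    have dL: "((\<lambda>x. It h e (Suc (Suc m)) s x) has_vector_derivative h (e + Suc m) u * It h e (Suc m) s u)
       (at u within {a..b})"
      using It_deriv[OF s u, of e "Suc (Suc m)"] by simp
    have "((\<lambda>x. It h e (Suc (Suc m)) s x - R (Suc m) x) has_vector_derivative
          h (e + Suc m) u * It h e (Suc m) s u - (0 + h (e + Suc m) u * It h e (Suc m) s u)) (at u within {a..b})"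
      using has_vector_derivative_diff[OF dL dR] by (simp only: sum.distrib S1 S2)
    then show ?thesis unfolding D_def[abs_def] by simp
  qed
  have Dc: "continuous_on {a..b} D"
    by (rule continuous_on_vector_derivative[OF dD])
  have Dconst: "D x = D a" if "x \<in> {a..b}" for x
    by (rule has_derivative_zero_unique_strong_interval[where k = "{}", OF _ Dc refl _ that])
       (use dD in \<open>auto simp: has_vector_derivative_def\<close>)
  have "D s = 0"
    unfolding D_def R_def \<gamma>_def by simp
  then have "D t = 0" using Dconst[OF s] Dconst[OF t] by simp
  then show ?case using Req'[OF t, of "Suc m"] unfolding D_def by simp
qed


lemma It_rev:
  assumes hp: "\<And>k. h (Suc (Suc k)) = h k"
  shows "s \<in> {a..b} \<Longrightarrow> t \<in> {a..b} \<Longrightarrow> It h e n t s = (-1) ^ n * It h (e + n + 1) n s t"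
proof (induction n arbitrary: e s t)
  case 0 then show ?case by simp
next
  case (Suc n)
  note s = Suc.prems(1) and t = Suc.prems(2)
  have gc: "continuous_on {a..b} (\<lambda>r. h e r * It h (e + n + 2) n s r)"
    by (rule continuous_on_mult[OF hc It_cont1[OF s]])
  have "It h e (Suc n) t s = oint (\<lambda>r. h e r * It h (e + 1) n r s) t s"
    by (rule LP[OF t s])
  also have "\<dots> = oint (\<lambda>r. (-1) ^ n * (h e r * It h (e + n + 2) n s r)) t s"
  proof (rule oint_cong[OF _ t s])
    fix r assume r: "r \<in> {a..b}"
    show "h e r * It h (e + 1) n r s = (-1) ^ n * (h e r * It h (e + n + 2) n s r)"
      using Suc.IH[OF s r, of "e + 1"] by (simp add: algebra_simps)
  qed
  also have "\<dots> = (-1) ^ n * oint (\<lambda>r. h e r * It h (e + n + 2) n s r) t s"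
    by (rule oint_cmul[OF gc t s])
  also have "\<dots> = (-1) ^ Suc n * oint (\<lambda>r. h e r * It h (e + n + 2) n s r) s t"
    using oint_swap[OF gc s t] by simp
  also have "oint (\<lambda>r. h e r * It h (e + n + 2) n s r) s t = It h (e + Suc n + 1) (Suc n) s t"
  proof -
    have eq: "e + n + 2 + n = e + 2 * Suc n" by simp
    have "h (e + n + 2 + n) = h e"
      unfolding eq by (rule hper[where h = h, OF hp])
    then show ?thesis by simp
  qed
  finally show ?case .
qed

end

lemma It_shift2:
  assumes hp: "\<And>k. h (Suc (Suc k)) = h k"
  shows "It h (e + 2 * m) n s t = It h e n s t"
proof (induction n arbitrary: t)
  case 0 then show ?case by simp
next
  case (Suc n)
  have "h (e + 2 * m + n) = h (e + n)"
    using hper[where h = h, OF hp, of "e + n" m] by (simp add: algebra_simps)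
  then show ?case using Suc by simp
qed

lemma It_Suc_shift: "It (\<lambda>k. h (Suc k)) e n s t = It h (Suc e) n s t"
  by (induction n arbitrary: t) auto

lemma integral_cmul_complex_gen:
  fixes f :: "real \<Rightarrow> complex"
  shows "integral S (\<lambda>x. c * f x) = c * integral S f"
proof (cases "c = 0 \<or> f integrable_on S")
  case True then show ?thesis
    using integral_cmul_complex by auto
next
  case False
  have "\<not> (\<lambda>x. c * f x) integrable_on S"
  proof
    assume "(\<lambda>x. c * f x) integrable_on S"
    then have "(\<lambda>x. inverse c * (c * f x)) integrable_on S"
      by (metis has_integral_mult_right integrable_on_def)
    then show False using False by simp
  qed
  then show ?thesis using False by (simp add: not_integrable_integral)
qed

lemma oint_cmul_gen: "oint (\<lambda>x. c * f x) s t = c * oint f s t"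
  unfolding oint_def by (simp add: integral_cmul_complex_gen)

lemma XpowIt: "Xpow P n s t = fact n * It (\<lambda>k. if even (Suc k) then P else (\<lambda>\<xi>. 1 / P \<xi>)) 0 n s t"
proof (induction n arbitrary: t)
  case 0 then show ?case by simp
next
  case (Suc n)
  have "Xpow P (Suc n) s t = of_nat (Suc n) * oint (\<lambda>\<xi>. fact n * ((if even (Suc n) then P else (\<lambda>\<xi>. 1 / P \<xi>)) \<xi> *
      It (\<lambda>k. if even (Suc k) then P else (\<lambda>\<xi>. 1 / P \<xi>)) 0 n s \<xi>)) s t"
    by (simp add: Suc.IH algebra_simps)
  also have "\<dots> = fact (Suc n) * It (\<lambda>k. if even (Suc k) then P else (\<lambda>\<xi>. 1 / P \<xi>)) 0 (Suc n) s t"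
    by (simp only: oint_cmul_gen) (simp add: algebra_simps)
  finally show ?case .
qed


theorem theorem2:
  fixes Phi :: "real \<Rightarrow> complex" and a b x0 x :: real and n :: nat
  assumes "continuous_on {a..b} Phi"
    and "\<forall>t\<in>{a..b}. Phi t \<noteq> 0"
    and "x0 \<in> {a..b}" and "x \<in> {a..b}"
  shows "(even n \<longrightarrow> Xtilde Phi n x0 x = Xpow Phi n x x0)
       \<and> (odd n \<longrightarrow> Xtilde Phi n x0 x = - Xtilde Phi n x x0
                    \<and> Xpow Phi n x0 x = - Xpow Phi n x x0)"
proof -
  define h0 where "h0 = (\<lambda>k::nat. if even (Suc k) then Phi else (\<lambda>\<xi>. 1 / Phi \<xi>))"
  have c1: "continuous_on {a..b} (\<lambda>\<xi>. 1 / Phi \<xi>)"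
    using assms(1,2) by (intro continuous_on_divide continuous_on_const) auto
  have hc: "continuous_on {a..b} (h0 k)" for k
    using c1 assms(1) by (simp add: h0_def)
  have hp: "h0 (Suc (Suc k)) = h0 k" for k by (simp add: h0_def)
  have X: "Xpow Phi n s t = fact n * It h0 0 n s t" for s t
    unfolding h0_def by (rule XpowIt)
  have fe: "(\<lambda>k::nat. if even (Suc k) then (\<lambda>\<xi>. 1 / Phi \<xi>) else (\<lambda>\<xi>. 1 / (1 / Phi \<xi>))) = (\<lambda>k. h0 (Suc k))"
    by (auto simp: h0_def fun_eq_iff)
  have T: "Xtilde Phi n s t = fact n * It h0 1 n s t" for s t
    unfolding Xtilde_def XpowIt fe It_Suc_shift by simp
  have R: "It h0 e n t s = (-1) ^ n * It h0 (e + n + 1) n s t" if "s \<in> {a..b}" "t \<in> {a..b}" for e s t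
    by (rule It_rev[where h = h0, OF hc hp that])
  have S: "It h0 (e + 2 * m) n s t = It h0 e n s t" for e m s t
    by (rule It_shift2[where h = h0, OF hp])
  show ?thesis
  proof (intro conjI impI)
    assume ev: "even n"
    then obtain m where m: "n = 2 * m" by blast
    have "It h0 0 n x x0 = It h0 (1 + 2 * m) n x0 x"
      using R[OF assms(3,4), of 0] ev m by simp
    also have "\<dots> = It h0 1 n x0 x" by (rule S)
    finally show "Xtilde Phi n x0 x = Xpow Phi n x x0"
      by (simp add: X T)
  next
    assume od: "odd n"
    then obtain m where m: "n = 2 * m + 1" by (metis oddE)
    have "It h0 1 n x x0 = - It h0 (1 + 2 * (m + 1)) n x0 x"
      using R[OF assms(3,4), of 1] od m by (simp add: algebra_simps)
    also have "It h0 (1 + 2 * (m + 1)) n x0 x = It h0 1 n x0 x" by (rule S)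
    finally show "Xtilde Phi n x0 x = - Xtilde Phi n x x0"
      by (simp add: T)
    have "It h0 0 n x x0 = - It h0 (0 + 2 * (m + 1)) n x0 x"
      using R[OF assms(3,4), of 0] od m by (simp add: algebra_simps)
    also have "It h0 (0 + 2 * (m + 1)) n x0 x = It h0 0 n x0 x" by (rule S)
    finally show "Xpow Phi n x0 x = - Xpow Phi n x x0"
      by (simp add: X)
  qed
qed

end
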